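(* For every non-negative integer $n$, the number of partitions into an even number of distinct parts $\lambda_1>\lambda_2>\dots>\lambda_{2l}$ with $\lambda_1+\lambda_3+\dots+\lambda_{2l-1}=n$ equals the number of partitions of $n$ with non-negative crank. Equivalently, \[\sum_{\pi\in\mathcal{D}_e}q^{\mathcal{O}(\pi)}=\sum_{\pi\in\tilde C_{\ge0}}q^{|\pi|},\] where $\mathcal{D}_e$ is the set of partitions into an even number of distinct parts, $\mathcal{O}(\pi)$ is the sum of the odd-indexed parts of $\pi$, and $\tilde C_{\ge 0}$ is the set of partitions with crank $\ge 0$.
   Context: A partition is a finite weakly decreasing sequence of positive integers $(\lambda_1,\lambda_2,\dots)$; the empty partition has $0$ parts (an even number) and norm $0$. The crank of a partition $\pi$ is defined as: the largest part of $\pi$ if $1$ is not a part of $\pi$ (the empty partition has crank $0$); otherwise, (the number of parts of $\pi$ larger than the number of $1$'s in $\pi$) minus (the number of $1$'s in $\pi$). *)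

theory Defs
  imports Main
begin

definition is_partition :: "nat list \<Rightarrow> bool" where
  "is_partition xs \<longleftrightarrow> sorted_wrt (\<ge>) xs \<and> (\<forall>x\<in>set xs. 0 < x)"

definition is_distinct_partition :: "nat list \<Rightarrow> bool" where
  "is_distinct_partition xs \<longleftrightarrow> sorted_wrt (>) xs \<and> (\<forall>x\<in>set xs. 0 < x)"

(* sum of the odd-indexed parts lambda_1 + lambda_3 + ... (1-based indexing) *)
definition odd_part_sum :: "nat list \<Rightarrow> nat" where
  "odd_part_sum xs = (\<Sum>i\<in>{i. i < length xs \<and> even i}. xs ! i)"

definition crank :: "nat list \<Rightarrow> int" where
  "crank xs = (let w = count_list xs 1 in
     if w = 0 then (if xs = [] then 0 else int (Max (set xs)))
     else int (length (filter (\<lambda>x. x > w) xs)) - int w)"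

end

theory Submission
  imports Defs "HOL-Library.Multiset"
begin


lemma ops_nil[simp]: "odd_part_sum [] = 0"
  by (simp add: odd_part_sum_def)

lemma ops_cons2[simp]: "odd_part_sum (x # y # t) = x + odd_part_sum t"
proof -
  have e: "{i. i < length (x # y # t) \<and> even i} = insert 0 ((\<lambda>i. i + 2) ` {i. i < length t \<and> even i})"
  proof (rule set_eqI)
    fix i show "i \<in> {i. i < length (x # y # t) \<and> even i} \<longleftrightarrow> i \<in> insert 0 ((\<lambda>i. i + 2) ` {i. i < length t \<and> even i})"
    proof (cases "i < 2")
      case True
      then show ?thesis by (cases i) auto
    next
      case False
      then have "i = (i - 2) + 2" by simp
      then show ?thesis using False by (auto simp: image_iff) (rule exI[of _ "i - 2"], presburger)
    qed
  qed
  have "odd_part_sum (x # y # t) = (x # y # t) ! 0 + (\<Sum>i\<in>(\<lambda>i. i + 2) ` {i. i < length t \<and> even i}. (x # y # t) ! i)"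
    unfolding odd_part_sum_def e by (subst sum.insert) auto
  also have "(\<Sum>i\<in>(\<lambda>i. i + 2) ` {i. i < length t \<and> even i}. (x # y # t) ! i) = odd_part_sum t"
    unfolding odd_part_sum_def by (subst sum.reindex) (auto simp: inj_on_def)
  finally show ?thesis by simp
qed

fun nb :: "nat list \<Rightarrow> nat" where
  "nb [] = 0" | "nb (b # _) = Suc b"

fun F :: "nat list \<Rightarrow> nat list \<Rightarrow> nat list" where
  "F (a # as) (b # bs) = (a + b + 1) # (a + nb bs) # F as bs"
| "F _ _ = []"

fun G :: "nat list \<Rightarrow> nat list \<times> nat list" where
  "G (p # r # rest) = (case G rest of (as, bs) \<Rightarrow> ((r - nb bs) # as, (p - (r - nb bs) - 1) # bs))"
| "G _ = ([], [])"

lemma sw_cons: "sorted_wrt (>) ((x::nat) # xs) \<longleftrightarrow> (xs = [] \<or> x > hd xs) \<and> sorted_wrt (>) xs"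
  by (cases xs) (auto simp: sorted_wrt2 transp_def)

lemma nb_le: "sorted_wrt (>) (b # bs) \<Longrightarrow> nb bs \<le> b"
  by (cases bs) (auto simp: sw_cons)

lemma F_props:
  assumes "length as = length bs" "sorted_wrt (>) as" "sorted_wrt (>) bs" "\<forall>a\<in>set as. 0 < a"
  shows "sorted_wrt (>) (F as bs) \<and> (\<forall>x\<in>set (F as bs). 0 < x) \<and> length (F as bs) = 2 * length as
    \<and> odd_part_sum (F as bs) = length as + sum_list as + sum_list bs
    \<and> (F as bs \<noteq> [] \<longrightarrow> hd (F as bs) = hd as + hd bs + 1) \<and> (F as bs = [] \<longleftrightarrow> as = [])"
  using assms
proof (induction as bs rule: list_induct2)
  case Nil
  then show ?case by simp
next
  case (Cons a as b bs)
  have IH: "sorted_wrt (>) (F as bs) \<and> (\<forall>x\<in>set (F as bs). 0 < x) \<and> length (F as bs) = 2 * length as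
    \<and> odd_part_sum (F as bs) = length as + sum_list as + sum_list bs
    \<and> (F as bs \<noteq> [] \<longrightarrow> hd (F as bs) = hd as + hd bs + 1) \<and> (F as bs = [] \<longleftrightarrow> as = [])"
    using Cons by (simp add: sw_cons)
  have nb: "nb bs \<le> b" using nb_le Cons.prems by blast
  have s1: "a + nb bs < a + b + 1" using nb by simp
  have s2: "F as bs \<noteq> [] \<Longrightarrow> hd (F as bs) < a + nb bs"
  proof -
    assume ne: "F as bs \<noteq> []"
    then have "as \<noteq> []" using IH by auto
    then have "bs \<noteq> []" using Cons.hyps by auto
    then have "nb bs = hd bs + 1" by (cases bs) auto
    moreover have "hd as < a" using Cons.prems \<open>as \<noteq> []\<close> by (simp add: sw_cons)
    ultimately show ?thesis using IH ne by simp
  qed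
  have "0 < a" using Cons.prems by simp
  then show ?case using IH s1 s2 Cons.hyps by (auto simp del: sorted_wrt.simps(2) simp add: sw_cons)
qed

lemma G_props:
  "even (length l) \<Longrightarrow> sorted_wrt (>) l \<Longrightarrow> (\<forall>x\<in>set l. 0 < x) \<Longrightarrow>
   (case G l of (as, bs) \<Rightarrow> length as = length bs \<and> sorted_wrt (>) as \<and> sorted_wrt (>) bs
      \<and> (\<forall>a\<in>set as. 0 < a) \<and> F as bs = l)"
proof (induction l rule: G.induct)
  case (1 p r rest)
  obtain as bs where g: "G rest = (as, bs)" by (cases "G rest")
  have IH: "length as = length bs \<and> sorted_wrt (>) as \<and> sorted_wrt (>) bs
      \<and> (\<forall>a\<in>set as. 0 < a) \<and> F as bs = rest"
    using 1 g by (auto simp: sw_cons)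
  have P: "sorted_wrt (>) (F as bs) \<and> (\<forall>x\<in>set (F as bs). 0 < x) \<and> length (F as bs) = 2 * length as
    \<and> odd_part_sum (F as bs) = length as + sum_list as + sum_list bs
    \<and> (F as bs \<noteq> [] \<longrightarrow> hd (F as bs) = hd as + hd bs + 1) \<and> (F as bs = [] \<longleftrightarrow> as = [])"
    using F_props IH by blast
  have pr: "r < p" "0 < r" using "1.prems" by auto
  have key: "nb bs < r \<and> (as \<noteq> [] \<longrightarrow> hd as + nb bs < r)"
  proof (cases "as = []")
    case True
    then have "bs = []" using IH by auto
    then show ?thesis using True pr by simp
  next
    case False
    then have bsne: "bs \<noteq> []" using IH by auto
    then have nbe: "nb bs = hd bs + 1" by (cases bs) auto
    have "rest \<noteq> []" using False P IH by auto
    then have "hd rest < r" using "1.prems" by (cases rest) auto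
    moreover have "hd rest = hd as + hd bs + 1" using P IH False by auto
    moreover have "0 < hd as" using IH False by auto
    ultimately show ?thesis using nbe False by simp
  qed
  define a where "a = r - nb bs"
  define b where "b = p - a - 1"
  have ab: "a + b + 1 = p" "a + nb bs = r" using key pr unfolding a_def b_def by auto
  have sa: "sorted_wrt (>) (a # as)" using IH key unfolding a_def by (auto simp del: sorted_wrt.simps(2) simp add: sw_cons)
  have sb: "sorted_wrt (>) (b # bs)"
  proof -
    have "bs \<noteq> [] \<Longrightarrow> hd bs < b" using ab pr by (cases bs) auto
    then show ?thesis using IH by (auto simp del: sorted_wrt.simps(2) simp add: sw_cons)
  qed
  have apos: "0 < a"
  proof (cases "as = []")
    case True
    then have "bs = []" using IH by auto
    then show ?thesis using pr unfolding a_def by simp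
  next
    case False
    then show ?thesis using sa IH by (auto simp del: sorted_wrt.simps(2) simp add: sw_cons)
  qed
  have bb: "p - Suc a = b" "p - a - 1 = b" using ab by auto
  have "G (p # r # rest) = (a # as, b # bs)" using g bb by (simp add: a_def[symmetric])
  then show ?case using IH ab sa sb apos by simp
qed auto

lemma GF: "length as = length bs \<Longrightarrow> G (F as bs) = (as, bs)"
  by (induction as bs rule: list_induct2) auto

definition Pset :: "nat \<Rightarrow> (nat list \<times> nat list) set" where
  "Pset n = {(as, bs). length as = length bs \<and> sorted_wrt (>) as \<and> sorted_wrt (>) bs
      \<and> (\<forall>a\<in>set as. 0 < a) \<and> length as + sum_list as + sum_list bs = n}"

definition Sset :: "nat \<Rightarrow> nat list set" where
  "Sset n = {xs. is_distinct_partition xs \<and> even (length xs) \<and> odd_part_sum xs = n}"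

lemma bij_source: "bij_betw (\<lambda>(as, bs). F as bs) (Pset n) (Sset n)"
proof (rule bij_betw_byWitness[where f' = G])
  show "\<forall>a\<in>Pset n. G (case a of (as, bs) \<Rightarrow> F as bs) = a"
    by (auto simp: Pset_def GF)
  show "\<forall>a'\<in>Sset n. (case G a' of (as, bs) \<Rightarrow> F as bs) = a'"
  proof
    fix l assume "l \<in> Sset n"
    then have "even (length l)" "sorted_wrt (>) l" "\<forall>x\<in>set l. 0 < x"
      by (auto simp: Sset_def is_distinct_partition_def)
    from G_props[OF this] show "(case G l of (as, bs) \<Rightarrow> F as bs) = l" by (auto split: prod.splits)
  qed
  show "(\<lambda>(as, bs). F as bs) ` Pset n \<subseteq> Sset n"
  proof
    fix l assume "l \<in> (\<lambda>(as, bs). F as bs) ` Pset n"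
    then obtain as bs where "(as, bs) \<in> Pset n" "l = F as bs" by auto
    then show "l \<in> Sset n" using F_props[of as bs]
      by (auto simp: Pset_def Sset_def is_distinct_partition_def)
  qed
  show "G ` Sset n \<subseteq> Pset n"
  proof
    fix x assume "x \<in> G ` Sset n"
    then obtain l where l: "l \<in> Sset n" "x = G l" by auto
    then have h: "even (length l)" "sorted_wrt (>) l" "\<forall>x\<in>set l. 0 < x" "odd_part_sum l = n"
      by (auto simp: Sset_def is_distinct_partition_def)
    obtain as bs where g: "G l = (as, bs)" by (cases "G l")
    have "length as = length bs \<and> sorted_wrt (>) as \<and> sorted_wrt (>) bs
      \<and> (\<forall>a\<in>set as. 0 < a) \<and> F as bs = l" using G_props[OF h(1-3)] g by simp
    then show "x \<in> Pset n" using F_props[of as bs] h l g by (auto simp: Pset_def)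
  qed
qed




definition mk :: "(nat \<Rightarrow> nat) \<Rightarrow> nat \<Rightarrow> nat list" where
  "mk c K = concat (map (\<lambda>k. replicate (c k) k) (rev [1..<K+1]))"

lemma mk_0[simp]: "mk c 0 = []" by (simp add: mk_def)

lemma mk_Suc[simp]: "mk c (Suc K) = replicate (c (Suc K)) (Suc K) @ mk c K"
  by (simp add: mk_def)

lemma mk_set: "set (mk c K) \<subseteq> {1..K}"
  by (induction K) auto

lemma sw_rep: "sorted_wrt (\<lambda>x y. y \<le> x) (replicate n (x::nat))"
  by (induction n) auto

lemma mk_sorted: "sorted_wrt (\<ge>) (mk c K)"
proof (induction K)
  case 0 then show ?case by simp
next
  case (Suc K)
  have "\<forall>y\<in>set (mk c K). y \<le> Suc K" using mk_set[of c K] by auto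
  then show ?case using Suc sw_rep by (auto simp: sorted_wrt_append)
qed

lemma count_list_replicate': "count_list (replicate n x) y = (if x = y then n else 0)"
  by (induction n) auto

lemma mk_count: "count_list (mk c K) k = (if 1 \<le> k \<and> k \<le> K then c k else 0)"
  by (induction K) (auto simp: count_list_replicate')

lemma mk_sum: "sum_list (mk c K) = (\<Sum>k=1..K. k * c k)"
  by (induction K) (auto simp: sum_list_replicate)

lemma mk_cong: "(\<And>k. 1 \<le> k \<Longrightarrow> k \<le> K \<Longrightarrow> c k = d k) \<Longrightarrow> mk c K = mk d K"
  by (induction K) auto

lemma desc_eq:
  assumes "sorted_wrt (\<ge>) (xs::nat list)" "sorted_wrt (\<ge>) ys" "mset xs = mset ys"
  shows "xs = ys"
proof -
  have "sorted (rev xs)" "sorted (rev ys)" using assms by (auto simp: sorted_wrt_rev)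
  moreover have "mset (rev xs) = mset (rev ys)" using assms by simp
  ultimately have "sort (rev ys) = rev xs" "sort (rev ys) = rev ys"
    using properties_for_sort by metis+
  then show ?thesis by simp
qed

lemma mk_count_eq:
  assumes "sorted_wrt (\<ge>) xs" "set xs \<subseteq> {1..K}"
  shows "mk (count_list xs) K = xs"
proof (rule desc_eq[OF mk_sorted assms(1)])
  show "mset (mk (count_list xs) K) = mset xs"
  proof (rule multiset_eqI)
    fix k
    show "count (mset (mk (count_list xs) K)) k = count (mset xs) k"
    proof (cases "1 \<le> k \<and> k \<le> K")
      case True then show ?thesis by (simp add: count_mset mk_count)
    next
      case False
      then have "k \<notin> set xs" using assms(2) by auto
      then show ?thesis using False by (simp add: count_mset mk_count count_notin)
    qed
  qed
qed

fun yl :: "nat list \<Rightarrow> nat list" where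
  "yl [] = []" | "yl (b # bs) = (b - nb bs) # yl bs"

fun bl :: "nat list \<Rightarrow> nat list" where
  "bl [] = []" | "bl (y # ys) = (y + nb (bl ys)) # bl ys"

lemma length_yl[simp]: "length (yl bs) = length bs" by (induction bs) auto
lemma length_bl[simp]: "length (bl ys) = length ys" by (induction ys) auto

lemma yl_bl[simp]: "yl (bl ys) = ys" by (induction ys) auto

lemma bl_yl: "sorted_wrt (>) bs \<Longrightarrow> bl (yl bs) = bs"
proof (induction bs)
  case Nil then show ?case by simp
next
  case (Cons b bs)
  then have "nb bs \<le> b" using nb_le by blast
  then show ?case using Cons by simp
qed

lemma bl_sorted: "sorted_wrt (>) (bl ys)"
proof (induction ys)
  case Nil then show ?case by simp
next
  case (Cons y ys)
  have "bl ys \<noteq> [] \<Longrightarrow> hd (bl ys) < y + nb (bl ys)" by (cases "bl ys") auto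
  then show ?case using Cons by (simp del: sorted_wrt.simps(2) add: sw_cons) blast
qed

lemma sum_yl: "sorted_wrt (>) bs \<Longrightarrow> sum_list (yl bs) + length bs = nb bs"
proof (induction bs)
  case Nil then show ?case by simp
next
  case (Cons b bs)
  then have "nb bs \<le> b" using nb_le by blast
  then show ?case using Cons by simp
qed

definition wt :: "nat list \<Rightarrow> nat" where
  "wt ys = (\<Sum>i<length ys. (i+1) * ys!i)"

lemma wt_nil[simp]: "wt [] = 0" by (simp add: wt_def)

lemma wt_cons[simp]: "wt (y # ys) = y + sum_list ys + wt ys"
proof -
  have "wt (y # ys) = y + (\<Sum>i<length ys. (i+2) * ys!i)"
    unfolding wt_def length_Cons sum.lessThan_Suc_shift by simp
  also have "(\<Sum>i<length ys. (i+2) * ys!i) = (\<Sum>i<length ys. ys!i) + wt ys"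
    unfolding wt_def by (simp add: sum.distrib[symmetric])
  also have "(\<Sum>i<length ys. ys!i) = sum_list ys"
    by (simp add: sum_list_sum_nth atLeast0LessThan)
  finally show ?thesis by simp
qed

definition tri :: "nat \<Rightarrow> nat" where "tri L = (\<Sum>i<L. i+1)"

lemma tri_Suc[simp]: "tri (Suc L) = tri L + Suc L" by (simp add: tri_def)
lemma tri_0[simp]: "tri 0 = 0" by (simp add: tri_def)

lemma wt_yl: "sorted_wrt (>) bs \<Longrightarrow> wt (yl bs) + tri (length bs) = sum_list bs + length bs"
proof (induction bs)
  case Nil then show ?case by simp
next
  case (Cons b bs)
  have s: "sorted_wrt (>) bs" using Cons by simp
  have "nb bs \<le> b" using nb_le Cons by blast
  then show ?case using Cons.IH[OF s] sum_yl[OF s] by simp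
qed




declare mk_Suc[simp del]

definition cnt :: "nat \<Rightarrow> nat list \<Rightarrow> nat \<Rightarrow> nat" where
  "cnt L ys k = (if k = 1 then ys!0 mod (L+1) else if k = L+1 then ys!0 div (L+1)
                 else if k \<le> L then ys!(k-1) else 0)"

lemma shift2: "(\<Sum>k=2..Suc m. f k) = (\<Sum>i<m. f (i+2::nat))"
  by (induction m) (auto simp: sum.cl_ivl_Suc)

lemma sum_cnt:
  assumes "length ys = L"
  shows "(\<Sum>k=1..L+1. k * cnt L ys k) = wt ys"
proof (cases L)
  case 0
  then show ?thesis using assms by (simp add: cnt_def)
next
  case (Suc m)
  have c1: "cnt L ys 1 + (L+1) * cnt L ys (L+1) = ys!0"
  proof -
    have "cnt L ys 1 = ys!0 mod (L+1)" "cnt L ys (L+1) = ys!0 div (L+1)" using Suc by (auto simp: cnt_def)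
    then show ?thesis by (simp only: mod_mult_div_eq)
  qed
  have "(\<Sum>k=1..L+1. k * cnt L ys k) = (\<Sum>k=1..L. k * cnt L ys k) + (L+1) * cnt L ys (L+1)"
    by (simp add: Suc sum.cl_ivl_Suc)
  also have "(\<Sum>k=1..L. k * cnt L ys k) = cnt L ys 1 + (\<Sum>k=2..L. k * cnt L ys k)"
    using Suc by (simp add: sum.atLeast_Suc_atMost numeral_2_eq_2)
  also have "(\<Sum>k=2..L. k * cnt L ys k) = (\<Sum>k=2..L. k * ys!(k-1))"
    by (rule sum.cong) (auto simp: cnt_def)
  also have "\<dots> = (\<Sum>i<m. (i+2) * ys!(i+1))" unfolding Suc shift2 by simp
  finally have "(\<Sum>k=1..L+1. k * cnt L ys k) = ys!0 + (\<Sum>i<m. (i+2) * ys!(i+1))" using c1 by simp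
  also have "\<dots> = wt ys"
  proof -
    have ly: "length ys = Suc m" using assms Suc by simp
    show ?thesis unfolding wt_def ly sum.lessThan_Suc_shift by (simp add: algebra_simps)
  qed
  finally show ?thesis .
qed

definition hh :: "nat list \<Rightarrow> nat list" where
  "hh as = map (\<lambda>i. as!i + i + 1) [0..<length as]"

lemma length_hh[simp]: "length (hh as) = length as" by (simp add: hh_def)
lemma nth_hh[simp]: "i < length as \<Longrightarrow> hh as ! i = as!i + i + 1" by (simp add: hh_def)

lemma hh_sum: "sum_list (hh as) = sum_list as + tri (length as)"
  by (simp add: hh_def interv_sum_list_conv_sum_set_nat sum.distrib[symmetric] tri_def
      sum_list_sum_nth atLeast0LessThan)

lemma sdec_gap: "sorted_wrt (>) (as::nat list) \<Longrightarrow> i \<le> j \<Longrightarrow> j < length as \<Longrightarrow> as!j + (j - i) \<le> as!i"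
proof (induction j)
  case 0 then show ?case by simp
next
  case (Suc j)
  show ?case
  proof (cases "i = Suc j")
    case True then show ?thesis by simp
  next
    case False
    then have "i \<le> j" using Suc by simp
    then have "as!j + (j - i) \<le> as!i" using Suc by simp
    moreover have "as!(Suc j) < as!j" using sorted_wrt_nth_less[OF Suc.prems(1), of j "Suc j"] Suc by simp
    ultimately show ?thesis using \<open>i \<le> j\<close> by simp
  qed
qed

lemma sdec_lower:
  assumes "sorted_wrt (>) (as::nat list)" "\<forall>a\<in>set as. 0 < a" "i < length as"
  shows "length as - i \<le> as!i"
proof -
  have "as!(length as - 1) + (length as - 1 - i) \<le> as!i"
    using sdec_gap[OF assms(1), of i "length as - 1"] assms by simp
  moreover have "0 < as!(length as - 1)" using assms by simp
  ultimately show ?thesis by simp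
qed

lemma hh_props:
  assumes "sorted_wrt (>) (as::nat list)" "\<forall>a\<in>set as. 0 < a"
  shows "sorted_wrt (\<ge>) (hh as)" "\<forall>x\<in>set (hh as). length as + 1 \<le> x \<and> 2 \<le> x"
proof -
  show "sorted_wrt (\<ge>) (hh as)"
    unfolding sorted_wrt_iff_nth_less
  proof (intro allI impI)
    fix i j assume "i < j" "j < length (hh as)"
    then have "as!j + (j - i) \<le> as!i" using sdec_gap[OF assms(1), of i j] by simp
    then show "hh as ! j \<le> hh as ! i" using \<open>i < j\<close> \<open>j < length (hh as)\<close> by simp
  qed
  show "\<forall>x\<in>set (hh as). length as + 1 \<le> x \<and> 2 \<le> x"
  proof
    fix x assume "x \<in> set (hh as)"
    then obtain i where i: "i < length as" "x = as!i + i + 1" by (auto simp: in_set_conv_nth)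
    have "length as - i \<le> as!i" "0 < as!i" using sdec_lower[OF assms i(1)] assms i(1) by auto
    then show "length as + 1 \<le> x \<and> 2 \<le> x" using i by simp
  qed
qed

definition Phi :: "nat list \<Rightarrow> nat list \<Rightarrow> nat list" where
  "Phi as bs = hh as @ mk (cnt (length as) (yl bs)) (length as + 1)"

lemma Phi_sum:
  assumes "length as = length bs" "sorted_wrt (>) bs"
  shows "sum_list (Phi as bs) = length as + sum_list as + sum_list bs"
proof -
  have "sum_list (Phi as bs) = sum_list as + tri (length as) + wt (yl bs)"
    unfolding Phi_def using sum_cnt[of "yl bs" "length as"] assms
    by (simp del: mk_Suc add: hh_sum mk_sum)
  then show ?thesis using wt_yl[OF assms(2)] assms(1) by simp
qed

definition Tset :: "nat \<Rightarrow> nat list set" where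
  "Tset n = {xs. is_partition xs \<and> sum_list xs = n \<and> crank xs \<ge> 0}"

lemma crank_nonneg:
  assumes "\<forall>x\<in>set h. w < x" "count_list (h @ t) 1 = w" "w \<le> length h"
  shows "crank (h @ t) \<ge> 0"
proof (cases "w = 0")
  case True
  then show ?thesis using assms(2) unfolding crank_def Let_def by auto
next
  case False
  have "filter (\<lambda>x. w < x) h = h" using assms(1) by (simp add: filter_id_conv)
  then have "length h \<le> length (filter (\<lambda>x. w < x) (h @ t))" by simp
  then show ?thesis using assms False unfolding crank_def Let_def by auto
qed

lemma Phi_in:
  assumes "(as, bs) \<in> Pset n"
  shows "Phi as bs \<in> Tset n"
proof -
  let ?L = "length as"
  let ?t = "mk (cnt ?L (yl bs)) (?L + 1)"
  have P: "length as = length bs" "sorted_wrt (>) as" "sorted_wrt (>) bs" "\<forall>a\<in>set as. 0 < a"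
    "length as + sum_list as + sum_list bs = n" using assms by (auto simp: Pset_def)
  note H = hh_props[OF P(2,4)]
  have ts: "set ?t \<subseteq> {1..?L+1}" by (rule mk_set)
  have part: "is_partition (Phi as bs)"
    unfolding is_partition_def Phi_def
  proof
    show "sorted_wrt (\<ge>) (hh as @ ?t)"
    proof -
      have "\<forall>x\<in>set (hh as). \<forall>y\<in>set ?t. y \<le> x"
      proof (intro ballI)
        fix x y assume "x \<in> set (hh as)" "y \<in> set ?t"
        then have "?L + 1 \<le> x" "y \<le> ?L + 1" using H(2) ts by auto
        then show "y \<le> x" by simp
      qed
      then show ?thesis unfolding sorted_wrt_append using H(1) mk_sorted by blast
    qed
    show "\<forall>x\<in>set (hh as @ ?t). 0 < x"
    proof
      fix x assume "x \<in> set (hh as @ ?t)"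
      then have "x \<in> set (hh as) \<or> x \<in> set ?t" by simp
      then show "0 < x" using H(2) ts by fastforce
    qed
  qed
  have "count_list (hh as) 1 = 0" using H(2) by (auto simp: count_list_0_iff)
  then have w: "count_list (Phi as bs) 1 = cnt ?L (yl bs) 1"
    unfolding Phi_def by (simp add: mk_count)
  have wl: "cnt ?L (yl bs) 1 \<le> ?L" by (simp add: cnt_def)
  have "crank (Phi as bs) \<ge> 0" unfolding Phi_def
    by (rule crank_nonneg[where w = "cnt ?L (yl bs) 1"]) (use H(2) w wl in \<open>auto simp: Phi_def\<close>)
  then show ?thesis using part Phi_sum[OF P(1,3)] P(5) by (simp add: Tset_def)
qed




lemma downclosed:
  assumes "finite (S::nat set)" "\<And>i j. i \<in> S \<Longrightarrow> j \<le> i \<Longrightarrow> j \<in> S"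
  shows "S = {..<card S}"
proof
  show "S \<subseteq> {..<card S}"
  proof
    fix i assume "i \<in> S"
    then have "{..i} \<subseteq> S" using assms(2) by auto
    then have "card {..i} \<le> card S" using assms(1) by (rule card_mono[rotated])
    then show "i \<in> {..<card S}" by simp
  qed
  show "{..<card S} \<subseteq> S"
  proof
    fix k assume k: "k \<in> {..<card S}"
    show "k \<in> S"
    proof (rule ccontr)
      assume "k \<notin> S"
      then have "S \<subseteq> {..<k}" using assms(2) by (metis lessThan_iff not_le subsetI)
      then have "card S \<le> k" using card_mono[of "{..<k}" S] by simp
      then show False using k by simp
    qed
  qed
qed

lemma desc_mono: "sorted_wrt (\<ge>) (xs::nat list) \<Longrightarrow> j \<le> i \<Longrightarrow> i < length xs \<Longrightarrow> xs!i \<le> xs!j"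
  by (cases "j = i") (auto dest: sorted_wrt_nth_less[of _ xs j i])

definition Lof :: "nat list \<Rightarrow> nat" where
  "Lof p = card {i. i < length p \<and> i + 2 \<le> p!i}"

lemma Lof_props:
  assumes "sorted_wrt (\<ge>) (p::nat list)"
  shows "Lof p \<le> length p" "\<And>i. i < length p \<Longrightarrow> (i + 2 \<le> p!i \<longleftrightarrow> i < Lof p)"
proof -
  let ?S = "{i. i < length p \<and> i + 2 \<le> p!i}"
  have fin: "finite ?S" by simp
  have S: "?S = {..<Lof p}" unfolding Lof_def
  proof (rule downclosed[OF fin])
    fix i j assume "i \<in> ?S" "j \<le> i"
    then have "i < length p" "i + 2 \<le> p!i" by auto
    moreover have "p!i \<le> p!j" using desc_mono[OF assms \<open>j \<le> i\<close> \<open>i < length p\<close>] .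
    ultimately show "j \<in> ?S" using \<open>j \<le> i\<close> by auto
  qed
  have "?S \<subseteq> {..<length p}" by auto
  then have "card ?S \<le> length p" using card_mono[of "{..<length p}" ?S] by simp
  then show "Lof p \<le> length p" unfolding Lof_def .
  fix i assume "i < length p"
  show "i + 2 \<le> p!i \<longleftrightarrow> i < Lof p"
  proof
    assume "i + 2 \<le> p!i" then have "i \<in> ?S" using \<open>i < length p\<close> by simp
    then show "i < Lof p" using S by auto
  next
    assume "i < Lof p" then have "i \<in> ?S" using S by auto
    then show "i + 2 \<le> p!i" by simp
  qed
qed

lemma T_struct:
  assumes "p \<in> Tset n" "L = Lof p"
  shows "L \<le> length p" "\<And>i. i < L \<Longrightarrow> L + 1 \<le> p!i \<and> i + 2 \<le> p!i"
    "\<forall>x\<in>set (drop L p). 1 \<le> x \<and> x \<le> L + 1"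
    "count_list (drop L p) 1 = count_list p 1" "count_list p 1 \<le> L"
    "sorted_wrt (\<ge>) p"
proof -
  have sp: "sorted_wrt (\<ge>) p" "\<forall>x\<in>set p. 0 < x" "0 \<le> crank p" using assms by (auto simp: Tset_def is_partition_def)
  show "sorted_wrt (\<ge>) p" using sp(1) .
  note LP = Lof_props[OF sp(1)]
  show Ll: "L \<le> length p" using LP assms by simp
  have hd: "L + 1 \<le> p!i \<and> i + 2 \<le> p!i" if "i < L" for i
  proof -
    have i2: "i + 2 \<le> p!i" using LP(2)[of i] that Ll assms by simp
    have "(L - 1) + 2 \<le> p!(L-1)" using LP(2)[of "L-1"] that Ll assms by simp
    moreover have "p!(L-1) \<le> p!i" using desc_mono[OF sp(1), of i "L-1"] that Ll by simp
    ultimately show ?thesis using that i2 by simp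
  qed
  show "\<And>i. i < L \<Longrightarrow> L + 1 \<le> p!i \<and> i + 2 \<le> p!i" using hd by blast
  have tl: "\<forall>x\<in>set (drop L p). 1 \<le> x \<and> x \<le> L + 1"
  proof
    fix x assume "x \<in> set (drop L p)"
    then obtain j where j: "j < length p - L" "x = p!(L + j)" by (auto simp: in_set_conv_nth)
    have Llt: "L < length p" using j by simp
    have "p!L < L + 2" using LP(2)[of L] Llt assms by simp
    moreover have "p!(L+j) \<le> p!L" using desc_mono[OF sp(1), of L "L+j"] j by simp
    moreover have "0 < x" using sp(2) j by simp
    ultimately show "1 \<le> x \<and> x \<le> L + 1" using j by simp
  qed
  then show "\<forall>x\<in>set (drop L p). 1 \<le> x \<and> x \<le> L + 1" .
  have "\<forall>x\<in>set (take L p). 2 \<le> x"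
  proof
    fix x assume "x \<in> set (take L p)"
    then obtain i where "i < L" "x = p!i" using Ll by (auto simp: in_set_conv_nth)
    then show "2 \<le> x" using hd[of i] by simp
  qed
  then have "count_list (take L p) 1 = 0" by (auto simp: count_list_0_iff)
  then show cl: "count_list (drop L p) 1 = count_list p 1"
    using count_list_append[of "take L p" "drop L p" 1] by simp
  show "count_list p 1 \<le> L"
  proof (rule ccontr)
    assume "\<not> count_list p 1 \<le> L"
    then have wL: "L < count_list p 1" by simp
    let ?w = "count_list p 1"
    have "filter (\<lambda>x. ?w < x) (drop L p) = []" using tl wL by (auto simp: filter_empty_conv)
    then have "length (filter (\<lambda>x. ?w < x) p) = length (filter (\<lambda>x. ?w < x) (take L p))"
      using arg_cong[OF append_take_drop_id[of L p], of "\<lambda>l. length (filter (\<lambda>x. ?w < x) l)"]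
      by (simp del: append_take_drop_id)
    also have "\<dots> \<le> L" using length_filter_le[of _ "take L p"] Ll by (metis length_take min.absorb2 order_trans)
    finally have "length (filter (\<lambda>x. ?w < x) p) < ?w" using wL by simp
    then have "crank p < 0" using wL unfolding crank_def Let_def by simp
    then show False using sp(3) by simp
  qed
qed

lemma modhelp: "(a::nat) \<le> L \<Longrightarrow> (a + (L+1)*c) mod (L+1) = a"
  by (subst mod_mult_self2) simp

lemma divhelp: "(a::nat) \<le> L \<Longrightarrow> (a + (L+1)*c) div (L+1) = c"
  by (subst div_mult_self2) simp_all

definition tys :: "nat \<Rightarrow> nat list \<Rightarrow> nat list" where
  "tys L t = map (\<lambda>k. if k = 0 then count_list t 1 + (L+1) * count_list t (L+1) else count_list t (k+1)) [0..<L]"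

definition Psi :: "nat list \<Rightarrow> nat list \<times> nat list" where
  "Psi p = (map (\<lambda>i. p!i - i - 1) [0..<Lof p], bl (tys (Lof p) (drop (Lof p) p)))"

lemma Psi_props:
  assumes "p \<in> Tset n"
  shows "case Psi p of (as, bs) \<Rightarrow> length as = length bs \<and> sorted_wrt (>) as \<and> sorted_wrt (>) bs
      \<and> (\<forall>a\<in>set as. 0 < a) \<and> Phi as bs = p"
proof -
  define L where "L = Lof p"
  note TS = T_struct[OF assms L_def]
  define as where "as = map (\<lambda>i. p!i - i - 1) [0..<L]"
  define t where "t = drop L p"
  define ys where "ys = tys L t"
  have Ps: "Psi p = (as, bl ys)" unfolding Psi_def as_def ys_def t_def L_def by simp
  have las: "length as = L" "length ys = L" by (auto simp: as_def ys_def tys_def)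
  have sa: "sorted_wrt (>) as" unfolding sorted_wrt_iff_nth_less
  proof (intro allI impI)
    fix i j assume ij: "i < j" "j < length as"
    then have "p!j \<le> p!i" "j + 2 \<le> p!j" using desc_mono[OF TS(6), of i j] TS(1,2) las by auto
    then show "as!j < as!i" using ij las by (simp add: as_def)
  qed
  have pa: "\<forall>a\<in>set as. 0 < a"
  proof
    fix a assume "a \<in> set as"
    then obtain i where "i < L" "a = p!i - i - 1" by (auto simp: as_def)
    then show "0 < a" using TS(2)[of i] by simp
  qed
  have hhe: "hh as = take L p"
  proof (rule nth_equalityI)
    show "length (hh as) = length (take L p)" using las TS(1) by simp
    fix i assume "i < length (hh as)"
    then have "i < L" using las by simp
    then show "hh as ! i = take L p ! i" using TS(2)[of i] las by (simp add: as_def)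
  qed
  have cn: "cnt L ys k = count_list t k" if "1 \<le> k" "k \<le> L + 1" for k
  proof -
    have c1: "count_list t 1 \<le> L" using TS(4,5) t_def by simp
    consider "k = 1" | "k \<noteq> 1" "k = L + 1" | "k \<noteq> 1" "k \<noteq> L + 1" by blast
    then show ?thesis
    proof cases
      case 1
      show ?thesis
      proof (cases "L = 0")
        case True then show ?thesis using 1 c1 by (simp add: cnt_def)
      next
        case False
        then have ys0: "ys!0 = count_list t 1 + (L+1) * count_list t (L+1)" by (simp add: ys_def tys_def)
        have "cnt L ys k = ys!0 mod (L+1)" using 1 by (simp add: cnt_def)
        also have "\<dots> = (count_list t 1 + (L+1) * count_list t (L+1)) mod (L+1)" by (simp only: ys0)
        also have "\<dots> = count_list t 1" by (rule modhelp[OF c1])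
        finally show ?thesis using 1 by simp
      qed
    next
      case 2
      then have "L \<noteq> 0" by simp
      then have ys0: "ys!0 = count_list t 1 + (L+1) * count_list t (L+1)" by (simp add: ys_def tys_def)
      have "cnt L ys k = ys!0 div (L+1)" using 2 by (simp add: cnt_def)
      also have "\<dots> = (count_list t 1 + (L+1) * count_list t (L+1)) div (L+1)" by (simp only: ys0)
      also have "\<dots> = count_list t (L+1)" by (rule divhelp[OF c1])
      finally show ?thesis using 2 by simp
    next
      case 3
      then have "k - 1 < L" "k - 1 \<noteq> 0" "k \<le> L" using that by auto
      then have "ys!(k-1) = count_list t k" by (simp add: ys_def tys_def)
      then show ?thesis using 3 \<open>k \<le> L\<close> by (simp add: cnt_def)
    qed
  qed
  have "mk (cnt L ys) (L+1) = mk (count_list t) (L+1)" by (rule mk_cong) (use cn in auto)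
  also have "\<dots> = t"
  proof -
    have "set t \<subseteq> {1..L+1}" using TS(3) unfolding t_def by auto
    moreover have "sorted_wrt (\<ge>) t" using TS(6) unfolding t_def by (rule sorted_wrt_drop)
    ultimately show ?thesis using mk_count_eq[of t "L+1"] by simp
  qed
  finally have "Phi as (bl ys) = p" unfolding Phi_def using las hhe t_def by simp
  then show ?thesis using Ps las sa pa bl_sorted by simp
qed

lemma Phi_Psi:
  assumes "(as, bs) \<in> Pset n"
  shows "Psi (Phi as bs) = (as, bs)"
proof -
  let ?L = "length as"
  define t where "t = mk (cnt ?L (yl bs)) (?L + 1)"
  have P: "length as = length bs" "sorted_wrt (>) as" "sorted_wrt (>) bs" "\<forall>a\<in>set as. 0 < a"
    using assms by (auto simp: Pset_def)
  have ts: "set t \<subseteq> {1..?L+1}" unfolding t_def by (rule mk_set)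
  have pe: "Phi as bs = hh as @ t" unfolding Phi_def t_def by simp
  have "{i. i < length (hh as @ t) \<and> i + 2 \<le> (hh as @ t)!i} = {..<?L}"
  proof (rule set_eqI)
    fix i
    show "i \<in> {i. i < length (hh as @ t) \<and> i + 2 \<le> (hh as @ t)!i} \<longleftrightarrow> i \<in> {..<?L}"
    proof (cases "i < ?L")
      case True
      then have "0 < as!i" using P(4) by simp
      then show ?thesis using True by (simp add: nth_append)
    next
      case False
      show ?thesis
      proof (cases "i < length (hh as @ t)")
        case True
        then have "t!(i - ?L) \<in> set t" using False by simp
        then have "t!(i - ?L) \<le> ?L + 1" using ts by auto
        then show ?thesis using False by (simp add: nth_append)
      next
        case False
        then show ?thesis using \<open>\<not> i < ?L\<close> by simp
      qed
    qed
  qed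
  then have L: "Lof (Phi as bs) = ?L" unfolding Lof_def pe by simp
  have a: "map (\<lambda>i. (hh as @ t)!i - i - 1) [0..<?L] = as"
    by (rule nth_equalityI) (auto simp: nth_append)
  have d: "drop ?L (hh as @ t) = t" by simp
  have ty: "tys ?L t = yl bs"
  proof (rule nth_equalityI)
    show "length (tys ?L t) = length (yl bs)" using P(1) by (simp add: tys_def)
    fix k assume "k < length (tys ?L t)"
    then have k: "k < ?L" by (simp add: tys_def)
    show "tys ?L t ! k = yl bs ! k"
    proof (cases "k = 0")
      case True
      have "count_list t 1 + (?L+1) * count_list t (?L+1) = cnt ?L (yl bs) 1 + (?L+1) * cnt ?L (yl bs) (?L+1)"
        unfolding t_def mk_count by simp
      also have "\<dots> = yl bs ! 0"
      proof -
        have "cnt ?L (yl bs) 1 = yl bs!0 mod (?L+1)" "cnt ?L (yl bs) (?L+1) = yl bs!0 div (?L+1)"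
          using k by (auto simp: cnt_def)
        then show ?thesis by (simp only: mod_mult_div_eq)
      qed
      finally show ?thesis using True k by (simp add: tys_def)
    next
      case False
      have "count_list t (k+1) = cnt ?L (yl bs) (k+1)" unfolding t_def mk_count using k by simp
      also have "\<dots> = yl bs ! k" using k False by (simp add: cnt_def)
      finally show ?thesis using False k by (simp add: tys_def)
    qed
  qed
  show ?thesis unfolding Psi_def L unfolding pe a d ty using bl_yl[OF P(3)] by simp
qed

lemma bij_target: "bij_betw (\<lambda>(as, bs). Phi as bs) (Pset n) (Tset n)"
proof (rule bij_betw_byWitness[where f' = Psi])
  show "\<forall>a\<in>Pset n. Psi (case a of (as, bs) \<Rightarrow> Phi as bs) = a"
    using Phi_Psi by auto
  show "\<forall>a'\<in>Tset n. (case Psi a' of (as, bs) \<Rightarrow> Phi as bs) = a'"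
  proof
    fix p assume p: "p \<in> Tset n"
    obtain as bs where e: "Psi p = (as, bs)" by (cases "Psi p")
    show "(case Psi p of (as, bs) \<Rightarrow> Phi as bs) = p" using Psi_props[OF p] e by simp
  qed
  show "(\<lambda>(as, bs). Phi as bs) ` Pset n \<subseteq> Tset n" using Phi_in by auto
  show "Psi ` Tset n \<subseteq> Pset n"
  proof
    fix x assume "x \<in> Psi ` Tset n"
    then obtain p where p: "p \<in> Tset n" "x = Psi p" by auto
    obtain as bs where e: "Psi p = (as, bs)" by (cases "Psi p")
    have h: "length as = length bs \<and> sorted_wrt (>) as \<and> sorted_wrt (>) bs
      \<and> (\<forall>a\<in>set as. 0 < a) \<and> Phi as bs = p" using Psi_props[OF p(1)] e by simp
    have "sum_list p = n" using p by (simp add: Tset_def)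
    then have "length as + sum_list as + sum_list bs = n" using Phi_sum[of as bs] h by simp
    then show "x \<in> Pset n" using h p e by (simp add: Pset_def)
  qed
qed

theorem theorem10:
  fixes n :: nat
  shows "card {xs. is_distinct_partition xs \<and> even (length xs) \<and> odd_part_sum xs = n}
       = card {xs. is_partition xs \<and> sum_list xs = n \<and> crank xs \<ge> 0}"
proof -
  have "card (Sset n) = card (Pset n)" using bij_betw_same_card[OF bij_source] by simp
  also have "\<dots> = card (Tset n)" using bij_betw_same_card[OF bij_target] .
  finally show ?thesis unfolding Sset_def Tset_def .
qed


end
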